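(* Let $N\ge3$ and let $d$ be a positive divisor of $N$. Then $p^d_*\circ\mathcal F=\mathcal F_d\circ\tilde p^d_*$ and $i^*_d\circ\mathcal F=\mathcal F_d\circ\tilde i^*_d$ as maps $\mathbb{Q}(\mu_N)\langle\langle\widetilde X\rangle\rangle\to\mathbb{Q}(\mu_N)\langle\langle X_d\rangle\rangle$ (all four maps $p^d_*,\tilde p^d_*,i^*_d,\tilde i^*_d$ extended $\mathbb{Q}(\mu_N)$-linearly).
   Context: $\zeta_N=\exp(2\pi i/N)$, $\mu_N$ the complex $N$-th roots of unity, $\iota:\{1,\dots,N\}\to\mathbb{Z}/N\mathbb{Z}$ and $\iota_d:\{1,\dots,N/d\}\to\mathbb{Z}/\frac Nd\mathbb{Z}$ the residue-class bijections, and $\nu_d:\mathbb{Z}/\frac Nd\mathbb{Z}\to d\mathbb{Z}/N\mathbb{Z}$ the group isomorphism with $\nu_d(\iota_d(m))=\iota(dm)$. $K\langle\langle\mathcal L\rangle\rangle$: noncommutative formal power series over $\mathcal L$. Alphabets $X=\{x_0\}\cup\{x_\zeta:\zeta\in\mu_N\}$, $X_d=\{x_0\}\cup\{x_\zeta:\zeta\in\mu_{N/d}\}\subset X$, $\widetilde X=\{\tilde x\}\cup\{\tilde x_\alpha:\alpha\in\mathbb{Z}/N\mathbb{Z}\}$, $\widetilde X_d=\{\tilde x\}\cup\{\tilde x_\beta:\beta\in\mathbb{Z}/\frac Nd\mathbb{Z}\}$. $\mathcal F:\mathbb{Q}(\mu_N)\langle\langle\widetilde X\rangle\rangle\to\mathbb{Q}(\mu_N)\langle\langle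 X\rangle\rangle$ is the continuous algebra morphism $\tilde x\mapsto x_0$, $\tilde x_\alpha\mapsto\sum_{m=1}^N\zeta_N^{-m\iota^{-1}(\alpha)}x_{\zeta_N^m}$; $\mathcal F_d:\mathbb{Q}(\mu_N)\langle\langle\widetilde X_d\rangle\rangle\to\mathbb{Q}(\mu_N)\langle\langle X_d\rangle\rangle$ is the continuous algebra morphism $\tilde x\mapsto x_0$, $\tilde x_\beta\mapsto\sum_{m=1}^{N/d}\zeta_N^{-md\,\iota_d^{-1}(\beta)}x_{\zeta_N^{dm}}$. Algebra morphisms $\mathbb{Q}\langle\langle X\rangle\rangle\to\mathbb{Q}\langle\langle X_d\rangle\rangle$: $p^d_*$: $x_0\mapsto d\,x_0$, $x_\zeta\mapsto x_{\zeta^d}$; $i^*_d$: $x_0\mapsto x_0$, $x_\zeta\mapsto x_\zeta$ if $\zeta\in\mu_{N/d}$ and $x_\zeta\mapsto0$ otherwise. Algebra morphisms $\mathbb{Q}\langle\langle\widetilde X\rangle\rangle\to\mathbb{Q}\langle\langle\widetilde X_d\rangle\rangle$: $\tilde p^d_*$: $\tilde x\mapsto d\,\tilde x$, $\tilde x_\alpha\mapsto d\,\tilde x_{\nu_d^{-1}(\alpha)}$ if $\alpha\in d\mathbb{Z}/N\mathbb{Z}$ and $\tilde x_\alpha\mapsto0$ otherwise; $\tilde i^*_d$: $\tilde x\mapsto\tilde x$, $\tilde x_\alpha\mapsto\tilde x_{\nu_d^{-1}(d\alpha)}$. *)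

theory Defs
  imports Complex_Main
begin

definition zeta :: "nat \<Rightarrow> complex" where
  "zeta N = cis (2 * pi / real N)"

definition mu :: "nat \<Rightarrow> complex set" where
  "mu N = {z. z ^ N = 1}"

text \<open>Letters. x_0 is X0, x_zeta is XZ zeta. The residue class alpha in Z/NZ is
  represented by its representative in {0..<N}; tilde-x is TX, tilde-x_alpha is TXa alpha.\<close>
datatype xletter = X0 | XZ complex
datatype txletter = TX | TXa nat

definition alphX :: "nat \<Rightarrow> xletter set" where
  "alphX N = insert X0 (XZ ` mu N)"
definition alphXd :: "nat \<Rightarrow> nat \<Rightarrow> xletter set" where
  "alphXd N d = insert X0 (XZ ` mu (N div d))"
definition alphTX :: "nat \<Rightarrow> txletter set" where
  "alphTX N = insert TX (TXa ` {..<N})"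
definition alphTXd :: "nat \<Rightarrow> nat \<Rightarrow> txletter set" where
  "alphTXd N d = insert TX (TXa ` {..<N div d})"

definition iota_inv :: "nat \<Rightarrow> nat \<Rightarrow> nat" where
  "iota_inv M a = (if a mod M = 0 then M else a mod M)"

text \<open>nu_d : Z/(N/d)Z -> dZ/NZ, beta |-> d*beta; its inverse alpha |-> alpha div d.\<close>
definition nu :: "nat \<Rightarrow> nat \<Rightarrow> nat \<Rightarrow> nat" where
  "nu N d b = (d * b) mod N"
definition nu_inv :: "nat \<Rightarrow> nat \<Rightarrow> nat" where
  "nu_inv d a = a div d"

text \<open>Noncommutative formal power series over an alphabet: coefficient functions on words.
  A continuous algebra morphism sending each letter a to a linear combination of letters
  (coefficient of letter b in the image of a is img a b) acts on a series S by the formula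
  below (expansion of sum_u S(u) phi(u_1)...phi(u_n)).\<close>
definition lsubst :: "'a set \<Rightarrow> ('a \<Rightarrow> 'b \<Rightarrow> complex) \<Rightarrow> ('a list \<Rightarrow> complex) \<Rightarrow> 'b list \<Rightarrow> complex" where
  "lsubst A img S w =
     (\<Sum>u \<in> {u. set u \<subseteq> A \<and> length u = length w}.
        S u * (\<Prod>i<length w. img (u ! i) (w ! i)))"

definition ind :: "'b \<Rightarrow> 'b \<Rightarrow> complex" where
  "ind b b' = (if b' = b then 1 else 0)"

definition F_img :: "nat \<Rightarrow> txletter \<Rightarrow> xletter \<Rightarrow> complex" where
  "F_img N a = (case a of
      TX \<Rightarrow> ind X0
    | TXa al \<Rightarrow> (\<lambda>b. \<Sum>m=1..N. zeta N powi (- (int m * int (iota_inv N al))) * ind (XZ (zeta N ^ m)) b))"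

definition Fd_img :: "nat \<Rightarrow> nat \<Rightarrow> txletter \<Rightarrow> xletter \<Rightarrow> complex" where
  "Fd_img N d a = (case a of
      TX \<Rightarrow> ind X0
    | TXa be \<Rightarrow> (\<lambda>b. \<Sum>m=1..N div d.
          zeta N powi (- (int m * int d * int (iota_inv (N div d) be))) * ind (XZ (zeta N ^ (d * m))) b))"

definition pd_img :: "nat \<Rightarrow> xletter \<Rightarrow> xletter \<Rightarrow> complex" where
  "pd_img d a = (case a of
      X0 \<Rightarrow> (\<lambda>b. of_nat d * ind X0 b)
    | XZ z \<Rightarrow> ind (XZ (z ^ d)))"

definition id_img :: "nat \<Rightarrow> nat \<Rightarrow> xletter \<Rightarrow> xletter \<Rightarrow> complex" where
  "id_img N d a = (case a of
      X0 \<Rightarrow> ind X0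
    | XZ z \<Rightarrow> (if z \<in> mu (N div d) then ind (XZ z) else (\<lambda>b. 0)))"

definition tpd_img :: "nat \<Rightarrow> nat \<Rightarrow> txletter \<Rightarrow> txletter \<Rightarrow> complex" where
  "tpd_img N d a = (case a of
      TX \<Rightarrow> (\<lambda>b. of_nat d * ind TX b)
    | TXa al \<Rightarrow> (if d dvd al then (\<lambda>b. of_nat d * ind (TXa (nu_inv d al)) b) else (\<lambda>b. 0)))"

definition tid_img :: "nat \<Rightarrow> nat \<Rightarrow> txletter \<Rightarrow> txletter \<Rightarrow> complex" where
  "tid_img N d a = (case a of
      TX \<Rightarrow> ind TX
    | TXa al \<Rightarrow> ind (TXa (nu_inv d ((d * al) mod N))))"

end

theory Submission imports Defs "HOL-Library.Real_Mod" begin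

lemma words_Suc: "{v. set v \<subseteq> B \<and> length v = Suc n} = (\<lambda>(x,xs). x#xs) ` (B \<times> {v. set v \<subseteq> B \<and> length v = n})"
proof (rule set_eqI)
  fix v show "v \<in> {v. set v \<subseteq> B \<and> length v = Suc n} \<longleftrightarrow> v \<in> (\<lambda>(x,xs). x#xs) ` (B \<times> {v. set v \<subseteq> B \<and> length v = n})"
    by (cases v) auto
qed

lemma sum_words_prod:
  assumes "finite B"
  shows "(\<Sum>v\<in>{v. set v \<subseteq> B \<and> length v = n}. \<Prod>i<n. h i (v!i)) = (\<Prod>i<n. \<Sum>b\<in>B. (h i b :: complex))"
proof (induction n arbitrary: h)
  case 0
  have "{v. set v \<subseteq> B \<and> length v = 0} = {[]}" by auto
  then show ?case by simp
next
  case (Suc n)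
  have inj: "inj_on (\<lambda>(x,xs). x#xs) (B \<times> {v. set v \<subseteq> B \<and> length v = n})"
    by (auto simp: inj_on_def)
  have "(\<Sum>v\<in>{v. set v \<subseteq> B \<and> length v = Suc n}. \<Prod>i<Suc n. h i (v!i))
     = (\<Sum>p\<in>B \<times> {v. set v \<subseteq> B \<and> length v = n}. \<Prod>i<Suc n. h i ((fst p # snd p)!i))"
    unfolding words_Suc by (subst sum.reindex[OF inj]) (auto intro!: sum.cong simp: case_prod_beta)
  also have "\<dots> = (\<Sum>p\<in>B \<times> {v. set v \<subseteq> B \<and> length v = n}. h 0 (fst p) * (\<Prod>i<n. h (Suc i) (snd p ! i)))"
    by (subst prod.lessThan_Suc_shift) simp
  also have "\<dots> = (\<Sum>x\<in>B. h 0 x) * (\<Sum>v\<in>{v. set v \<subseteq> B \<and> length v = n}. \<Prod>i<n. h (Suc i) (v ! i))"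
    unfolding sum_product sum.cartesian_product by (simp add: case_prod_beta)
  also have "\<dots> = (\<Sum>x\<in>B. h 0 x) * (\<Prod>i<n. \<Sum>b\<in>B. h (Suc i) b)"
    using Suc.IH[of "\<lambda>i. h (Suc i)"] by simp
  also have "\<dots> = (\<Prod>i<Suc n. \<Sum>b\<in>B. h i b)"
    by (subst prod.lessThan_Suc_shift) simp
  finally show ?case .
qed

lemma lsubst_comp:
  assumes "finite A" "finite B"
  shows "lsubst B g (lsubst A f S) w = lsubst A (\<lambda>a c. \<Sum>v\<in>B. f a v * g v c) S w"
proof -
  let ?W = "\<lambda>C. {v. set v \<subseteq> C \<and> length v = length w}"
  have "lsubst B g (lsubst A f S) w
     = (\<Sum>v\<in>?W B. (\<Sum>u\<in>?W A. S u * (\<Prod>i<length w. f (u!i) (v!i))) * (\<Prod>i<length w. g (v!i) (w!i)))"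
    unfolding lsubst_def by (intro sum.cong) auto
  also have "\<dots> = (\<Sum>u\<in>?W A. S u * (\<Sum>v\<in>?W B. (\<Prod>i<length w. f (u!i) (v!i) * g (v!i) (w!i))))"
    by (simp add: sum_distrib_left sum_distrib_right prod.distrib mult.assoc sum.swap[where A="?W B"])
  also have "\<dots> = (\<Sum>u\<in>?W A. S u * (\<Prod>i<length w. \<Sum>b\<in>B. f (u!i) b * g b (w!i)))"
    by (subst sum_words_prod[OF assms(2)]) rule
  also have "\<dots> = lsubst A (\<lambda>a c. \<Sum>v\<in>B. f a v * g v c) S w"
    unfolding lsubst_def by simp
  finally show ?thesis .
qed

lemma lsubst_cong:
  assumes "\<And>a c. a \<in> A \<Longrightarrow> f a c = g a c"
  shows "lsubst A f S = lsubst A g S"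
  unfolding lsubst_def
  by (intro ext sum.cong refl arg_cong2[where f="(*)"] prod.cong) (auto intro!: assms)


lemma zeta_pow_N: "N > 0 \<Longrightarrow> zeta N ^ N = 1"
  unfolding zeta_def DeMoivre by (simp add: cis_multiple_2pi[of 1, simplified])

lemma zeta_nz: "zeta N \<noteq> 0" unfolding zeta_def by simp

lemma zeta_pow_eq1: assumes "N > 0" "zeta N ^ a = 1" shows "N dvd a"
proof -
  have "cis (real a * (2 * pi / real N)) = 1" using assms(2) unfolding zeta_def DeMoivre .
  then obtain n where n: "real a * (2 * pi / real N) = of_int n * (2 * pi)" using cis_eq_1_iff by blast
  then have "real a = of_int n * real N" using assms(1) by (simp add: field_simps)
  then have "real_of_int (int a) = real_of_int (n * int N)" by simp
  then have "int a = n * int N" by (simp only: of_int_eq_iff)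
  then have "int N dvd int a" by simp
  then show ?thesis by simp
qed

lemma pow_mod_N: assumes "(x::complex) ^ N = 1" shows "x ^ a = x ^ (a mod N)"
proof -
  have "x ^ a = x ^ (N * (a div N) + a mod N)" by simp
  also have "\<dots> = (x ^ N) ^ (a div N) * x ^ (a mod N)" by (simp only: power_add power_mult)
  finally show ?thesis using assms by simp
qed

lemma pow_cong_N: "(x::complex) ^ N = 1 \<Longrightarrow> a mod N = b mod N \<Longrightarrow> x ^ a = x ^ b"
  using pow_mod_N[of x N a] pow_mod_N[of x N b] by simp

definition eta :: "nat \<Rightarrow> complex" where "eta N = inverse (zeta N)"

lemma zeta_powi_neg: "zeta N powi (- int e) = eta N ^ e"
  by (simp add: eta_def power_int_minus power_inverse)

lemma eta_pow_N: "N > 0 \<Longrightarrow> eta N ^ N = 1"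
  by (simp add: eta_def zeta_pow_N power_inverse)

lemma eta_pow_eq1: "N > 0 \<Longrightarrow> eta N ^ a = 1 \<Longrightarrow> N dvd a"
  using zeta_pow_eq1[of N a] by (simp add: eta_def power_inverse)

lemma iota_inv_mod: "M > 0 \<Longrightarrow> iota_inv M a mod M = a mod M"
  by (simp add: iota_inv_def)

lemma sum_1N: "(N::nat) > 0 \<Longrightarrow> g N = g 0 \<Longrightarrow> (\<Sum>m=1..N. g m) = (\<Sum>m<N. (g m :: complex))"
proof -
  assume "N > 0" "g N = g 0"
  then obtain n where n: "N = Suc n" by (cases N) auto
  have "(\<Sum>m=1..N. g m) = (\<Sum>m<N. g (Suc m))" using sum.atLeast1_atMost_eq[of g N] by simp
  also have "\<dots> = (\<Sum>m<N. g m)" using \<open>g N = g 0\<close> unfolding n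
    by (simp only: sum.lessThan_Suc_shift[of g] sum.lessThan_Suc[of "\<lambda>m. g (Suc m)"]) simp
  finally show ?thesis .
qed

lemma sum_group: fixes d M :: nat shows "(\<Sum>m<d*M. (g m :: complex)) = (\<Sum>j<d. \<Sum>k<M. g (j*M+k))"
proof (induction d)
  case 0 then show ?case by simp
next
  case (Suc d)
  have "{..<Suc d * M} = {..<d*M} \<union> {d*M..<d*M+M}" by auto
  then have "(\<Sum>m<Suc d*M. g m) = (\<Sum>m<d*M. g m) + (\<Sum>m\<in>{d*M..<d*M+M}. g m)"
    by (simp add: sum.union_disjoint ivl_disj_int)
  also have "(\<Sum>m\<in>{d*M..<d*M+M}. g m) = (\<Sum>k<M. g (d*M+k))"
    using sum.shift_bounds_nat_ivl[of g 0 "d*M" M] by (simp add: atLeast0LessThan add.commute)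
  finally show ?case using Suc by simp
qed

lemma geom_zero: assumes "(w::complex) ^ d = 1" "w \<noteq> 1" shows "(\<Sum>j<d. w ^ j) = 0"
  using assms by (simp add: sum_gp_strict)

lemma delta_sum1:
  assumes "finite A" "b \<in> A"
  shows "(\<Sum>v\<in>A. ind b v * G v) = (G b :: complex)"
proof -
  have "\<And>v. ind b v * G v = (if b = v then G v else 0)" by (simp add: ind_def)
  then show ?thesis using assms by (simp add: sum.delta)
qed

lemma delta_sum:
  assumes "finite A" "finite I" "\<And>m. m \<in> I \<Longrightarrow> b m \<in> A"
  shows "(\<Sum>v\<in>A. (\<Sum>m\<in>I. c m * ind (b m) v) * G v) = (\<Sum>m\<in>I. c m * G (b m))"
proof -
  have "(\<Sum>v\<in>A. (\<Sum>m\<in>I. c m * ind (b m) v) * G v) = (\<Sum>m\<in>I. c m * (\<Sum>v\<in>A. ind (b m) v * G v))"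
    by (simp add: sum_distrib_right sum_distrib_left mult.assoc sum.swap[where A=A])
  also have "\<dots> = (\<Sum>m\<in>I. c m * G (b m))"
    using assms by (intro sum.cong refl) (simp add: delta_sum1)
  finally show ?thesis .
qed


lemma zeta_powi_neg2: "zeta N powi (- (int a * int b)) = eta N ^ (a*b)"
  using zeta_powi_neg[of N "a*b"] by simp
lemma zeta_powi_neg3: "zeta N powi (- (int a * int b * int c)) = eta N ^ (a*b*c)"
  using zeta_powi_neg[of N "a*b*c"] by simp

lemma F_img_TXa: "F_img N (TXa al) = (\<lambda>v. \<Sum>m=1..N. eta N ^ (m * iota_inv N al) * ind (XZ (zeta N ^ m)) v)"
  unfolding F_img_def by (simp add: zeta_powi_neg2)

lemma Fd_img_TXa: "Fd_img N d (TXa be) c = (\<Sum>m=1..N div d. eta N ^ (m * d * iota_inv (N div d) be) * ind (XZ (zeta N ^ (d * m))) c)"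
  unfolding Fd_img_def by (simp add: zeta_powi_neg3)

lemma finite_alphX: "N > 0 \<Longrightarrow> finite (alphX N)"
proof -
  assume "N > 0"
  then have "finite {z::complex. z^N = 1}" by (intro finite_roots_unity) simp
  then show ?thesis unfolding alphX_def mu_def by simp
qed

lemma zeta_in_alphX: "N > 0 \<Longrightarrow> XZ (zeta N ^ m) \<in> alphX N"
  unfolding alphX_def mu_def by (simp add: power_mult[symmetric] mult.commute[of m] power_mult zeta_pow_N)

lemma finite_alphTX: "finite (alphTX N)" unfolding alphTX_def by simp
lemma finite_alphTXd: "finite (alphTXd N d)" unfolding alphTXd_def by simp

lemma letter_pd:
  assumes N: "N \<ge> 3" and d: "d > 0" "d dvd N" and al: "al < N"
  shows "(\<Sum>v\<in>alphX N. F_img N (TXa al) v * pd_img d v c)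
       = (\<Sum>v\<in>alphTXd N d. tpd_img N d (TXa al) v * Fd_img N d v c)"
proof -
  define M where "M = N div d"
  have NM: "N = d * M" using d unfolding M_def by simp
  have Np: "N > 0" using N by simp
  have Mp: "M > 0" using NM Np by (cases M) auto
  define \<iota> where "\<iota> = iota_inv N al"
  define \<eta> where "\<eta> = eta N"
  define \<zeta> where "\<zeta> = zeta N"
  have eN: "\<eta> ^ N = 1" using eta_pow_N[OF Np] unfolding \<eta>_def .
  have zN: "\<zeta> ^ N = 1" using zeta_pow_N[OF Np] unfolding \<zeta>_def .
  have imod: "\<iota> mod N = al" using iota_inv_mod[OF Np, of al] al unfolding \<iota>_def by simp
  define h where "h k = \<eta> ^ (k * \<iota>) * ind (XZ (\<zeta> ^ (k * d))) c" for k
  define \<omega> where "\<omega> = \<eta> ^ (M * \<iota>)"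
  have "(\<Sum>v\<in>alphX N. F_img N (TXa al) v * pd_img d v c)
      = (\<Sum>m=1..N. \<eta> ^ (m * \<iota>) * pd_img d (XZ (\<zeta> ^ m)) c)"
    unfolding F_img_TXa \<eta>_def \<zeta>_def \<iota>_def
    by (rule delta_sum) (auto simp: finite_alphX zeta_in_alphX Np)
  also have "\<dots> = (\<Sum>m=1..N. h m)"
    unfolding h_def pd_img_def by (simp add: power_mult)
  also have "\<dots> = (\<Sum>m<d*M. h m)"
  proof -
    have "h N = h 0" unfolding h_def
      using pow_cong_N[OF eN, of "N * \<iota>" 0] pow_cong_N[OF zN, of "N * d" 0] by simp
    then show ?thesis using sum_1N[OF Np, of h] NM by simp
  qed
  also have "\<dots> = (\<Sum>j<d. \<Sum>k<M. h (j*M+k))" by (rule sum_group)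
  also have "\<dots> = (\<Sum>j<d. \<Sum>k<M. \<omega> ^ j * h k)"
  proof (intro sum.cong refl)
    fix j k
    have "(j*M+k)*\<iota> = M*\<iota>*j + k*\<iota>" by (simp add: algebra_simps)
    then have 1: "\<eta> ^ ((j*M+k)*\<iota>) = \<omega> ^ j * \<eta> ^ (k*\<iota>)"
      unfolding \<omega>_def by (simp add: power_add power_mult)
    have "(j*M+k)*d = k*d + j*N" unfolding NM by (simp add: algebra_simps)
    then have "((j*M+k)*d) mod N = (k*d) mod N" by simp
    then have 2: "\<zeta> ^ ((j*M+k)*d) = \<zeta> ^ (k*d)" using pow_cong_N[OF zN] by blast
    show "h (j*M+k) = \<omega> ^ j * h k" unfolding h_def 1 2 by simp
  qed
  also have "\<dots> = (\<Sum>j<d. \<omega> ^ j) * (\<Sum>k<M. h k)"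
    by (simp add: sum_product)
  finally have L: "(\<Sum>v\<in>alphX N. F_img N (TXa al) v * pd_img d v c) = (\<Sum>j<d. \<omega> ^ j) * (\<Sum>k<M. h k)" .
  show ?thesis
  proof (cases "d dvd al")
    case True
    then obtain b where b: "al = d * b" by blast
    have bM: "b < M" using al b NM d by simp
    have "d dvd \<iota>" using imod True d(2) by (simp add: dvd_mod_iff[OF d(2), of \<iota>, symmetric])
    then obtain t where t: "\<iota> = d * t" by blast
    have "\<omega> = 1" unfolding \<omega>_def
      using pow_cong_N[OF eN, of "M * \<iota>" 0] by (simp add: t NM mult.left_commute)
    then have L1: "(\<Sum>j<d. \<omega> ^ j) = of_nat d" by simp
    define \<iota>' where "\<iota>' = iota_inv M b"
    have "tpd_img N d (TXa al) = (\<lambda>v. of_nat d * ind (TXa b) v)"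
      unfolding tpd_img_def nu_inv_def using True b d by simp
    then have R1: "(\<Sum>v\<in>alphTXd N d. tpd_img N d (TXa al) v * Fd_img N d v c) = of_nat d * Fd_img N d (TXa b) c"
      using delta_sum1[of "alphTXd N d" "TXa b" "\<lambda>v. Fd_img N d v c"] bM finite_alphTXd
      by (simp add: sum_distrib_left[symmetric] mult.assoc alphTXd_def M_def)
    have "Fd_img N d (TXa b) c = (\<Sum>k=1..M. \<eta> ^ (k * d * \<iota>') * ind (XZ (\<zeta> ^ (d * k))) c)"
      unfolding Fd_img_TXa M_def \<iota>'_def \<eta>_def \<zeta>_def ..
    also have "\<dots> = (\<Sum>k<M. \<eta> ^ (k * d * \<iota>') * ind (XZ (\<zeta> ^ (d * k))) c)"
    proof (rule sum_1N[OF Mp])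
      show "\<eta> ^ (M * d * \<iota>') * ind (XZ (\<zeta> ^ (d * M))) c = \<eta> ^ (0 * d * \<iota>') * ind (XZ (\<zeta> ^ (d * 0))) c"
      proof -
        have "M * d * \<iota>' = N * \<iota>'" using NM by simp
        then have a: "\<eta> ^ (M * d * \<iota>') = 1" using eN by (simp only: power_mult) simp
        have b: "\<zeta> ^ (d * M) = 1" using zN NM by simp
        show ?thesis unfolding a b by simp
      qed
    qed
    also have "\<dots> = (\<Sum>k<M. h k)"
    proof (intro sum.cong refl)
      fix k
      have e1: "(d * \<iota>') mod N = d * (\<iota>' mod M)" unfolding NM by simp
      have e2: "\<iota>' mod M = b" unfolding \<iota>'_def using iota_inv_mod[OF Mp, of b] bM by simp
      have "(d * \<iota>') mod N = \<iota> mod N" unfolding e1 e2 imod b ..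
      then have eq: "(k * (d * \<iota>')) mod N = (k * \<iota>) mod N" by (rule mod_mult_cong[OF refl])
      have "\<eta> ^ (k * d * \<iota>') = \<eta> ^ (k * \<iota>)"
        by (rule pow_cong_N[OF eN]) (use eq in \<open>simp add: mult.assoc\<close>)
      then show "\<eta> ^ (k * d * \<iota>') * ind (XZ (\<zeta> ^ (d * k))) c = h k"
        unfolding h_def by (simp add: mult.commute)
    qed
    finally have R2: "Fd_img N d (TXa b) c = (\<Sum>k<M. h k)" .
    show ?thesis unfolding L L1 R1 R2 ..
  next
    case False
    have "\<omega> \<noteq> 1"
    proof
      assume "\<omega> = 1"
      then have "N dvd M * \<iota>" using eta_pow_eq1[OF Np] unfolding \<omega>_def \<eta>_def by blast
      then have "d dvd \<iota>" using NM Mp by (simp add: mult.commute)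
      then have "d dvd al" using imod dvd_mod_iff[OF d(2), of \<iota>] by simp
      then show False using False by simp
    qed
    moreover have "\<omega> ^ d = 1" unfolding \<omega>_def
      using pow_cong_N[OF eN, of "M * \<iota> * d" 0] by (simp add: power_mult[symmetric] NM mult.commute mult.left_commute)
    ultimately have "(\<Sum>j<d. \<omega> ^ j) = 0" by (rule geom_zero[rotated])
    moreover have "tpd_img N d (TXa al) = (\<lambda>v. 0)"
      unfolding tpd_img_def using False by simp
    ultimately show ?thesis using L by simp
  qed
qed


lemma letter_id:
  assumes N: "N \<ge> 3" and d: "d > 0" "d dvd N" and al: "al < N"
  shows "(\<Sum>v\<in>alphX N. F_img N (TXa al) v * id_img N d v c)
       = (\<Sum>v\<in>alphTXd N d. tid_img N d (TXa al) v * Fd_img N d v c)"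
proof -
  define M where "M = N div d"
  have NM: "N = d * M" using d unfolding M_def by simp
  have Np: "N > 0" using N by simp
  have Mp: "M > 0" using NM Np by (cases M) auto
  define \<iota> where "\<iota> = iota_inv N al"
  define \<eta> where "\<eta> = eta N"
  define \<zeta> where "\<zeta> = zeta N"
  have eN: "\<eta> ^ N = 1" using eta_pow_N[OF Np] unfolding \<eta>_def .
  have zN: "\<zeta> ^ N = 1" using zeta_pow_N[OF Np] unfolding \<zeta>_def .
  have imod: "\<iota> mod N = al" using iota_inv_mod[OF Np, of al] al unfolding \<iota>_def by simp
  define f where "f m = \<eta> ^ (m * \<iota>) * ind (XZ (\<zeta> ^ m)) c" for m
  have mem: "\<zeta> ^ m \<in> mu M \<longleftrightarrow> d dvd m" for m
  proof
    assume "\<zeta> ^ m \<in> mu M"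
    then have "zeta N ^ (m * M) = 1" unfolding mu_def \<zeta>_def by (simp add: power_mult)
    then have "N dvd m * M" using zeta_pow_eq1[OF Np] by blast
    then show "d dvd m" using NM Mp by simp
  next
    assume "d dvd m"
    then obtain t where "m = d * t" by blast
    then have "(\<zeta> ^ m) ^ M = (\<zeta> ^ N) ^ t" unfolding NM by (simp add: power_mult[symmetric] algebra_simps)
    then show "\<zeta> ^ m \<in> mu M" unfolding mu_def using zN by simp
  qed
  have "(\<Sum>v\<in>alphX N. F_img N (TXa al) v * id_img N d v c)
      = (\<Sum>m=1..N. \<eta> ^ (m * \<iota>) * id_img N d (XZ (\<zeta> ^ m)) c)"
    unfolding F_img_TXa \<eta>_def \<zeta>_def \<iota>_def
    by (rule delta_sum) (auto simp: finite_alphX zeta_in_alphX Np)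
  also have "\<dots> = (\<Sum>m\<in>{1..N}. if d dvd m then f m else 0)"
    unfolding id_img_def f_def M_def[symmetric] using mem by (intro sum.cong refl) auto
  also have "\<dots> = (\<Sum>m\<in>{1..N} \<inter> {m. d dvd m}. f m)"
    by (simp add: sum.inter_restrict)
  also have "{1..N} \<inter> {m. d dvd m} = (\<lambda>k. d * k) ` {1..M}"
  proof (rule set_eqI, rule iffI)
    fix m assume "m \<in> {1..N} \<inter> {m. d dvd m}"
    then obtain t where "m = d * t" "1 \<le> m" "m \<le> N" by auto
    then show "m \<in> (\<lambda>k. d * k) ` {1..M}" using NM d by auto
  next
    fix m assume "m \<in> (\<lambda>k. d * k) ` {1..M}"
    then show "m \<in> {1..N} \<inter> {m. d dvd m}" using NM d by auto
  qed
  also have "(\<Sum>m\<in>(\<lambda>k. d * k) ` {1..M}. f m) = (\<Sum>k=1..M. f (d * k))"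
    using d by (subst sum.reindex) (auto simp: inj_on_def)
  finally have L: "(\<Sum>v\<in>alphX N. F_img N (TXa al) v * id_img N d v c) = (\<Sum>k=1..M. f (d * k))" .
  define b where "b = nu_inv d ((d * al) mod N)"
  have bM: "b = al mod M" unfolding b_def nu_inv_def NM using d by simp
  then have bM': "b < M" using Mp by simp
  define \<iota>' where "\<iota>' = iota_inv M b"
  have "tid_img N d (TXa al) = ind (TXa b)" unfolding tid_img_def b_def by simp
  then have "(\<Sum>v\<in>alphTXd N d. tid_img N d (TXa al) v * Fd_img N d v c) = Fd_img N d (TXa b) c"
    using delta_sum1[of "alphTXd N d" "TXa b" "\<lambda>v. Fd_img N d v c"] bM' finite_alphTXd
    by (simp add: alphTXd_def M_def)
  also have "\<dots> = (\<Sum>k=1..M. \<eta> ^ (k * d * \<iota>') * ind (XZ (\<zeta> ^ (d * k))) c)"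
    unfolding Fd_img_TXa M_def \<iota>'_def \<eta>_def \<zeta>_def ..
  also have "\<dots> = (\<Sum>k=1..M. f (d * k))"
  proof (intro sum.cong refl)
    fix k
    have "\<iota>' mod M = b" unfolding \<iota>'_def using iota_inv_mod[OF Mp, of b] bM' by simp
    moreover have "\<iota> mod M = al mod M"
    proof -
      have "\<iota> mod N mod M = \<iota> mod M" by (rule mod_mod_cancel) (simp add: NM)
      then show ?thesis using imod by simp
    qed
    ultimately have "\<iota>' mod M = \<iota> mod M" using bM by simp
    then have "(d * \<iota>') mod N = (d * \<iota>) mod N" unfolding NM by simp
    then have eq: "(k * (d * \<iota>')) mod N = (k * (d * \<iota>)) mod N" by (rule mod_mult_cong[OF refl])
    have "\<eta> ^ (k * d * \<iota>') = \<eta> ^ (d * k * \<iota>)"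
      by (rule pow_cong_N[OF eN]) (use eq in \<open>simp add: ac_simps\<close>)
    then show "\<eta> ^ (k * d * \<iota>') * ind (XZ (\<zeta> ^ (d * k))) c = f (d * k)"
      unfolding f_def by simp
  qed
  finally show ?thesis using L by simp
qed

theorem lemmaA4:
  fixes N d :: nat and S :: "txletter list \<Rightarrow> complex"
  assumes "N \<ge> 3" and "d > 0" and "d dvd N"
  shows "lsubst (alphX N) (pd_img d) (lsubst (alphTX N) (F_img N) S)
           = lsubst (alphTXd N d) (Fd_img N d) (lsubst (alphTX N) (tpd_img N d) S)
       \<and> lsubst (alphX N) (id_img N d) (lsubst (alphTX N) (F_img N) S)
           = lsubst (alphTXd N d) (Fd_img N d) (lsubst (alphTX N) (tid_img N d) S)"
proof -
  have Np: "N > 0" using assms by simp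
  have fX: "finite (alphX N)" using finite_alphX[OF Np] .
  have X0: "X0 \<in> alphX N" unfolding alphX_def by simp
  have TX: "TX \<in> alphTXd N d" unfolding alphTXd_def by simp
  have P: "(\<Sum>v\<in>alphX N. F_img N a v * pd_img d v c)
       = (\<Sum>v\<in>alphTXd N d. tpd_img N d a v * Fd_img N d v c)" if "a \<in> alphTX N" for a c
  proof (cases a)
    case TX
    have "(\<Sum>v\<in>alphX N. F_img N a v * pd_img d v c) = pd_img d X0 c"
      unfolding TX F_img_def using delta_sum1[OF fX X0] by simp
    moreover have "(\<Sum>v\<in>alphTXd N d. tpd_img N d a v * Fd_img N d v c) = of_nat d * Fd_img N d TX c"
      unfolding TX tpd_img_def using delta_sum1[OF finite_alphTXd \<open>TX \<in> alphTXd N d\<close>, of "\<lambda>v. Fd_img N d v c"]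
      by (simp add: sum_distrib_left[symmetric] mult.assoc)
    ultimately show ?thesis by (simp add: pd_img_def Fd_img_def)
  next
    case (TXa al)
    then have "al < N" using that unfolding alphTX_def by auto
    then show ?thesis unfolding TXa using letter_pd assms by blast
  qed
  have I: "(\<Sum>v\<in>alphX N. F_img N a v * id_img N d v c)
       = (\<Sum>v\<in>alphTXd N d. tid_img N d a v * Fd_img N d v c)" if "a \<in> alphTX N" for a c
  proof (cases a)
    case TX
    have "(\<Sum>v\<in>alphX N. F_img N a v * id_img N d v c) = id_img N d X0 c"
      unfolding TX F_img_def using delta_sum1[OF fX X0] by simp
    moreover have "(\<Sum>v\<in>alphTXd N d. tid_img N d a v * Fd_img N d v c) = Fd_img N d TX c"
      unfolding TX tid_img_def using delta_sum1[OF finite_alphTXd \<open>TX \<in> alphTXd N d\<close>, of "\<lambda>v. Fd_img N d v c"]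
      by simp
    ultimately show ?thesis by (simp add: id_img_def Fd_img_def)
  next
    case (TXa al)
    then have "al < N" using that unfolding alphTX_def by auto
    then show ?thesis unfolding TXa using letter_id assms by blast
  qed
  show ?thesis
  proof (intro conjI ext)
    fix w
    show "lsubst (alphX N) (pd_img d) (lsubst (alphTX N) (F_img N) S) w
           = lsubst (alphTXd N d) (Fd_img N d) (lsubst (alphTX N) (tpd_img N d) S) w"
      unfolding lsubst_comp[OF finite_alphTX fX] lsubst_comp[OF finite_alphTX finite_alphTXd]
      by (rule fun_cong[OF lsubst_cong]) (rule P)
    show "lsubst (alphX N) (id_img N d) (lsubst (alphTX N) (F_img N) S) w
           = lsubst (alphTXd N d) (Fd_img N d) (lsubst (alphTX N) (tid_img N d) S) w"
      unfolding lsubst_comp[OF finite_alphTX fX] lsubst_comp[OF finite_alphTX finite_alphTXd]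
      by (rule fun_cong[OF lsubst_cong]) (rule I)
  qed
qed

end
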